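(* Let $\Sigma$ be a finite set of formulas. In $\mathcal M^{\mathsf{CS4}}_\Sigma$, every chain $\Gamma_0\prec_\Sigma\Gamma_1\prec_\Sigma\cdots\prec_\Sigma\Gamma_n$ satisfies $n\le|\Sigma|$ (so has length at most $|\Sigma|+1$); moreover $\sqsubseteq_c$ is backward confluent with respect to $\preccurlyeq_\Sigma$: whenever $\Phi\sqsubseteq_c\Psi\preccurlyeq_\Sigma\Theta$, there is $\Upsilon\in W_c$ with $\Phi\preccurlyeq_\Sigma\Upsilon\sqsubseteq_c\Theta$.
   Context: Formulas over a countably infinite set $\mathbb P$: $p\mid\bot\mid\varphi\wedge\psi\mid\varphi\vee\psi\mid\varphi\to\psi\mid\Diamond\varphi\mid\Box\varphi$; $\mathcal L$ is the set of all formulas. $\mathsf{CS4}$ is the least set of formulas containing all intuitionistic propositional tautologies and all instances of $\Box(\varphi\to\psi)\to(\Box\varphi\to\Box\psi)$, $\Box(\varphi\to\psi)\to(\Diamond\varphi\to\Diamond\psi)$, $\Box\varphi\to\varphi$, $\varphi\to\Diamond\varphi$, $\Box\varphi\to\Box\Box\varphi$, $\Diamond\Diamond\varphi\to\Diamond\varphi$, closed under modus ponens and necessitation. $\Gamma\vdash\Delta$ means $\mathsf{CS4}\vdash\bigwedge\Gamma'\to\bigvee\Delta'$ for finite $\Gamma'\subseteq\Gamma$, $\Delta'\subseteq\Delta$. A set $X$ is prime if $X\vdash\varphi$ implies $\varphi\in X$ and $\varphi\vee\psi\in X$ implies $\varphi\in X$ or $\psi\in X$. A $\mathsf{CS4}$-theory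 is a pair $\Phi=(\Phi^+;\Phi^\Diamond)$ with $\Phi^+$ prime and $\Diamond\bigvee\Psi\notin\Phi^+$ for every nonempty finite $\Psi\subseteq\Phi^\Diamond$. $\Phi^\Box=\{\varphi:\Box\varphi\in\Phi^+\}$. $W_c$ = all $\mathsf{CS4}$-theories; $W_{\bot c}=\{(\mathcal L;\varnothing)\}$; $\Phi\preccurlyeq_c\Psi$ iff $\Phi^+\subseteq\Psi^+$; $\Phi\sqsubseteq_c\Psi$ iff $\Phi^\Box\subseteq\Psi^+$ and $\Phi^\Diamond\subseteq\Psi^\Diamond$; $V_c(p)=\{\Phi:p\in\Phi^+\}$. For $\Gamma,\Delta\in W_c$, $\Gamma\preccurlyeq_\Sigma\Delta$ iff $\Gamma\preccurlyeq_c\Delta$ and either $\Gamma^+=\Delta^+$ or there is $\chi\in\Sigma$ with $\chi\in\Delta^+\setminus\Gamma^+$; $\Gamma\prec_\Sigma\Delta$ means $\Gamma\preccurlyeq_\Sigma\Delta$ and not $\Delta\preccurlyeq_\Sigma\Gamma$. $\mathcal M^{\mathsf{CS4}}_\Sigma=(W_c,W_{\bot c},\preccurlyeq_\Sigma,\sqsubseteq_c,V_c)$. *)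

theory Defs
  imports Main
begin

datatype fm =
    Atom nat
  | Bot
  | And fm fm
  | Or fm fm
  | Imp fm fm
  | Dia fm
  | Box fm

definition Top :: fm where "Top = Imp Bot Bot"

text \<open>CS4: intuitionistic propositional logic (Hilbert axiom schemes over all
  modal formulas, which together with modus ponens yield exactly all instances
  of intuitionistic tautologies) plus the modal axioms, closed under MP and
  necessitation.\<close>
inductive CS4 :: "fm \<Rightarrow> bool" where
  ax_K: "CS4 (Imp p (Imp q p))"
| ax_S: "CS4 (Imp (Imp p (Imp q r)) (Imp (Imp p q) (Imp p r)))"
| ax_andE1: "CS4 (Imp (And p q) p)"
| ax_andE2: "CS4 (Imp (And p q) q)"
| ax_andI: "CS4 (Imp p (Imp q (And p q)))"
| ax_orI1: "CS4 (Imp p (Or p q))"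
| ax_orI2: "CS4 (Imp q (Or p q))"
| ax_orE: "CS4 (Imp (Imp p r) (Imp (Imp q r) (Imp (Or p q) r)))"
| ax_bot: "CS4 (Imp Bot p)"
| ax_boxK: "CS4 (Imp (Box (Imp p q)) (Imp (Box p) (Box q)))"
| ax_diaK: "CS4 (Imp (Box (Imp p q)) (Imp (Dia p) (Dia q)))"
| ax_T: "CS4 (Imp (Box p) p)"
| ax_diaT: "CS4 (Imp p (Dia p))"
| ax_4: "CS4 (Imp (Box p) (Box (Box p)))"
| ax_dia4: "CS4 (Imp (Dia (Dia p)) (Dia p))"
| mp: "CS4 (Imp p q) \<Longrightarrow> CS4 p \<Longrightarrow> CS4 q"
| nec: "CS4 p \<Longrightarrow> CS4 (Box p)"

fun conj :: "fm list \<Rightarrow> fm" where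
  "conj [] = Top"
| "conj [x] = x"
| "conj (x # xs) = And x (conj xs)"

fun disj :: "fm list \<Rightarrow> fm" where
  "disj [] = Bot"
| "disj [x] = x"
| "disj (x # xs) = Or x (disj xs)"

definition derives :: "fm set \<Rightarrow> fm set \<Rightarrow> bool" where
  "derives \<Gamma> \<Delta> \<longleftrightarrow> (\<exists>gs ds. set gs \<subseteq> \<Gamma> \<and> set ds \<subseteq> \<Delta> \<and> CS4 (Imp (conj gs) (disj ds)))"

definition prime_set :: "fm set \<Rightarrow> bool" where
  "prime_set X \<longleftrightarrow> (\<forall>\<phi>. derives X {\<phi>} \<longrightarrow> \<phi> \<in> X) \<and>
                   (\<forall>\<phi> \<psi>. Or \<phi> \<psi> \<in> X \<longrightarrow> \<phi> \<in> X \<or> \<psi> \<in> X)"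

text \<open>A CS4-theory Phi = (Phi-plus; Phi-dia) is a pair (fst, snd).\<close>
type_synonym theory_c = "fm set \<times> fm set"

definition is_theory :: "theory_c \<Rightarrow> bool" where
  "is_theory \<Phi> \<longleftrightarrow> prime_set (fst \<Phi>) \<and>
     (\<forall>ps. ps \<noteq> [] \<longrightarrow> set ps \<subseteq> snd \<Phi> \<longrightarrow> Dia (disj ps) \<notin> fst \<Phi>)"

definition Wc :: "theory_c set" where
  "Wc = {\<Phi>. is_theory \<Phi>}"

definition Wbotc :: "theory_c set" where
  "Wbotc = {(UNIV, {})}"

definition boxset :: "theory_c \<Rightarrow> fm set" where
  "boxset \<Phi> = {\<phi>. Box \<phi> \<in> fst \<Phi>}"

definition preceq_c :: "theory_c \<Rightarrow> theory_c \<Rightarrow> bool" where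
  "preceq_c \<Phi> \<Psi> \<longleftrightarrow> fst \<Phi> \<subseteq> fst \<Psi>"

definition sqsub_c :: "theory_c \<Rightarrow> theory_c \<Rightarrow> bool" where
  "sqsub_c \<Phi> \<Psi> \<longleftrightarrow> boxset \<Phi> \<subseteq> fst \<Psi> \<and> snd \<Phi> \<subseteq> snd \<Psi>"

definition Vc :: "nat \<Rightarrow> theory_c set" where
  "Vc p = {\<Phi>. Atom p \<in> fst \<Phi>}"

definition preceq_S :: "fm set \<Rightarrow> theory_c \<Rightarrow> theory_c \<Rightarrow> bool" where
  "preceq_S \<Sigma> \<Gamma> \<Delta> \<longleftrightarrow> preceq_c \<Gamma> \<Delta> \<and>
     (fst \<Gamma> = fst \<Delta> \<or> (\<exists>\<chi>\<in>\<Sigma>. \<chi> \<in> fst \<Delta> \<and> \<chi> \<notin> fst \<Gamma>))"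

definition prec_S :: "fm set \<Rightarrow> theory_c \<Rightarrow> theory_c \<Rightarrow> bool" where
  "prec_S \<Sigma> \<Gamma> \<Delta> \<longleftrightarrow> preceq_S \<Sigma> \<Gamma> \<Delta> \<and> \<not> preceq_S \<Sigma> \<Delta> \<Gamma>"

end

theory Submission
  imports Defs
begin

lemma prec_step:
  assumes "prec_S \<Sigma> A B"
  shows "\<Sigma> \<inter> fst A \<subset> \<Sigma> \<inter> fst B"
proof -
  have 1: "fst A \<subseteq> fst B" using assms by (simp add: prec_S_def preceq_S_def preceq_c_def)
  have "fst A \<noteq> fst B" using assms by (auto simp: prec_S_def preceq_S_def preceq_c_def)
  then obtain \<chi> where "\<chi> \<in> \<Sigma>" "\<chi> \<in> fst B" "\<chi> \<notin> fst A"
    using assms by (auto simp: prec_S_def preceq_S_def)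
  then show ?thesis using 1 by blast
qed

lemma chain_card:
  assumes "finite \<Sigma>" "\<forall>i<n. prec_S \<Sigma> (\<Gamma> i) (\<Gamma> (Suc i))"
  shows "m \<le> n \<Longrightarrow> m \<le> card (\<Sigma> \<inter> fst (\<Gamma> m))"
proof (induction m)
  case 0 then show ?case by simp
next
  case (Suc m)
  then have "\<Sigma> \<inter> fst (\<Gamma> m) \<subset> \<Sigma> \<inter> fst (\<Gamma> (Suc m))"
    using assms(2) prec_step by simp
  then have "card (\<Sigma> \<inter> fst (\<Gamma> m)) < card (\<Sigma> \<inter> fst (\<Gamma> (Suc m)))"
    using assms(1) by (meson finite_Int psubset_card_mono)
  then show ?case using Suc by simp
qed

theorem mainTheorem18:
  fixes \<Sigma> :: "fm set"
  assumes "finite \<Sigma>"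
  shows "(\<forall>(\<Gamma> :: nat \<Rightarrow> theory_c) n.
            (\<forall>i\<le>n. \<Gamma> i \<in> Wc) \<longrightarrow> (\<forall>i<n. prec_S \<Sigma> (\<Gamma> i) (\<Gamma> (Suc i))) \<longrightarrow> n \<le> card \<Sigma>)
       \<and> (\<forall>\<Phi>\<in>Wc. \<forall>\<Psi>\<in>Wc. \<forall>\<Theta>\<in>Wc. sqsub_c \<Phi> \<Psi> \<and> preceq_S \<Sigma> \<Psi> \<Theta> \<longrightarrow>
            (\<exists>\<Upsilon>\<in>Wc. preceq_S \<Sigma> \<Phi> \<Upsilon> \<and> sqsub_c \<Upsilon> \<Theta>))"
proof (intro conjI allI impI ballI)
  fix \<Gamma> :: "nat \<Rightarrow> theory_c" and n
  assume "\<forall>i<n. prec_S \<Sigma> (\<Gamma> i) (\<Gamma> (Suc i))"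
  then have "n \<le> card (\<Sigma> \<inter> fst (\<Gamma> n))" using chain_card assms by blast
  also have "\<dots> \<le> card \<Sigma>" using assms by (simp add: card_mono)
  finally show "n \<le> card \<Sigma>" .
next
  fix \<Phi> \<Psi> \<Theta>
  assume W: "\<Phi> \<in> Wc" and h: "sqsub_c \<Phi> \<Psi> \<and> preceq_S \<Sigma> \<Psi> \<Theta>"
  let ?U = "(fst \<Phi>, {} :: fm set)"
  have "?U \<in> Wc" using W by (simp add: Wc_def is_theory_def)
  moreover have "preceq_S \<Sigma> \<Phi> ?U" by (simp add: preceq_S_def preceq_c_def)
  moreover have "sqsub_c ?U \<Theta>" using h
    by (auto simp: sqsub_c_def boxset_def preceq_S_def preceq_c_def)
  ultimately show "\<exists>\<Upsilon>\<in>Wc. preceq_S \<Sigma> \<Phi> \<Upsilon> \<and> sqsub_c \<Upsilon> \<Theta>" by blast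
qed

end
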